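(* Let $X$ be a Banach space and $k\in\mathbb{N}$, and assume $X$ admits a $k$-spreading model equivalent to the usual basis of $\ell^1$. Then for every $\varepsilon>0$ there exists a $k$-sequence $(y_s)_{s\in[\mathbb{N}]^k}$ in $X$ with $1-\varepsilon\le\|y_s\|\le1$ for all $s$, which generates a $k$-spreading model $(\widetilde e_n)_n$ satisfying $\|\sum_{i=1}^n a_i\widetilde e_i\|\ge(1-\varepsilon)\sum_{i=1}^n|a_i|$ for all $n$ and all reals $a_1,\dots,a_n$.
   Context: $[M]^k$: $k$-subsets of $M\subseteq\mathbb{N}$ (increasing enumerations, $M(l)$ the $l$-th element of $M$). A $k$-sequence in $X$ is a map $[\mathbb{N}]^k\to X$. Plegma family: $(s_j)_{j=1}^l$ in $[M]^k$ with $s_1(i)<\dots<s_l(i)$ ($i\le k$) and $s_l(i)<s_1(i+1)$ ($i<k$). $(x_s)_{s\in[M]^k}$ generates the Hamel basis $(e_n)$ of a seminormed space $(E,\|\cdot\|_* )$ as a $k$-spreading model if for a null sequence $\delta_l>0$: $|\|\sum_{j=1}^m a_jx_{s_j}\|-\|\sum_{j=1}^m a_je_j\|_*|\le\delta_l$ for all $m\le l$, plegma $(s_j)_{j=1}^m$ in $[M]^k$ with $s_1(1)\ge M(l)$, $a_j\in[-1,1]$. $X$ admits $(e_n)$ as a $k$-spreading model if some $k$-sequence in $X$ and some infinite $M$ generate it. *)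

theory Defs
  imports "HOL-Analysis.Analysis" "HOL-Library.Infinite_Set"
begin

text \<open>A k-subset s of M, identified with its increasing enumeration.\<close>
definition kset :: "nat set \<Rightarrow> nat \<Rightarrow> nat set \<Rightarrow> bool" where
  "kset M k s \<longleftrightarrow> finite s \<and> s \<subseteq> M \<and> card s = k"

text \<open>s(i): the i-th element (1-indexed) of a finite set s of naturals.\<close>
definition el :: "nat set \<Rightarrow> nat \<Rightarrow> nat" where
  "el s i = sorted_list_of_set s ! (i - 1)"

text \<open>M(l): the l-th element (1-indexed) of an infinite set M.\<close>
definition elM :: "nat set \<Rightarrow> nat \<Rightarrow> nat" where
  "elM M l = enumerate M (l - 1)"

definition plegma :: "nat set \<Rightarrow> nat \<Rightarrow> nat set list \<Rightarrow> bool" where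
  "plegma M k ss \<longleftrightarrow> ss \<noteq> [] \<and> (\<forall>s\<in>set ss. kset M k s)
     \<and> (\<forall>i\<in>{1..k}. \<forall>j. Suc j < length ss \<longrightarrow> el (ss ! j) i < el (ss ! Suc j) i)
     \<and> (\<forall>i. 1 \<le> i \<and> i < k \<longrightarrow> el (last ss) i < el (hd ss) (Suc i))"

text \<open>A seminormed space with Hamel basis (e_n) is represented by the space c00 of finitely
  supported real sequences (e_n = n-th unit vector) with a seminorm N; N a = ||sum a_n e_n||_*.\<close>
definition fsupp :: "(nat \<Rightarrow> real) \<Rightarrow> bool" where
  "fsupp a \<longleftrightarrow> finite {n. a n \<noteq> 0}"

definition seminorm_c00 :: "((nat \<Rightarrow> real) \<Rightarrow> real) \<Rightarrow> bool" where
  "seminorm_c00 N \<longleftrightarrow>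
     (\<forall>a b. fsupp a \<longrightarrow> fsupp b \<longrightarrow> N (\<lambda>n. a n + b n) \<le> N a + N b)
   \<and> (\<forall>c a. fsupp a \<longrightarrow> N (\<lambda>n. c * a n) = \<bar>c\<bar> * N a)"

text \<open>Truncation: coefficient vector (a_1,...,a_m) padded by zeros (index j<m stands for j+1).\<close>
definition trunc :: "(nat \<Rightarrow> real) \<Rightarrow> nat \<Rightarrow> nat \<Rightarrow> real" where
  "trunc a m = (\<lambda>n. if n < m then a n else 0)"

definition generates_ksm ::
  "nat \<Rightarrow> (nat set \<Rightarrow> 'a::real_normed_vector) \<Rightarrow> nat set \<Rightarrow> ((nat \<Rightarrow> real) \<Rightarrow> real) \<Rightarrow> bool" where
  "generates_ksm k x M N \<longleftrightarrow> (\<exists>\<delta>::nat \<Rightarrow> real. (\<forall>l. \<delta> l > 0) \<and> \<delta> \<longlonglongrightarrow> 0 \<and>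
     (\<forall>l m ss a. 1 \<le> m \<and> m \<le> l \<and> length ss = m \<and> plegma M k ss \<and> el (hd ss) 1 \<ge> elM M l
        \<and> (\<forall>j. \<bar>a j\<bar> \<le> 1) \<longrightarrow>
        \<bar>norm (\<Sum>j<m. a j *\<^sub>R x (ss ! j)) - N (trunc a m)\<bar> \<le> \<delta> l))"

definition equiv_l1 :: "((nat \<Rightarrow> real) \<Rightarrow> real) \<Rightarrow> bool" where
  "equiv_l1 N \<longleftrightarrow> (\<exists>c C. 0 < c \<and> 0 < C \<and> (\<forall>n a.
      c * (\<Sum>i<n. \<bar>a i\<bar>) \<le> N (trunc a n) \<and> N (trunc a n) \<le> C * (\<Sum>i<n. \<bar>a i\<bar>)))"

end

theory Submission
  imports Defs
begin


lemma sorted_image_strict_mono: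
  assumes "strict_mono (h::nat\<Rightarrow>nat)" "finite s"
  shows "sorted_list_of_set (h ` s) = map h (sorted_list_of_set s)"
proof -
  have sm: "sorted_wrt (<) (sorted_list_of_set s)" by simp
  have "sorted_wrt (<) (map h (sorted_list_of_set s))"
    unfolding sorted_wrt_map by (rule sorted_wrt_mono_rel[OF _ sm]) (simp add: strict_mono_less assms(1))
  then have a: "sorted (map h (sorted_list_of_set s))" "distinct (map h (sorted_list_of_set s))"
    using strict_sorted_iff by blast+
  show ?thesis
    by (rule sorted_distinct_set_unique) (use a assms(2) in auto)
qed

lemma el_image:
  assumes "strict_mono (h::nat\<Rightarrow>nat)" "finite s" "1 \<le> r" "r \<le> card s"
  shows "el (h ` s) r = h (el s r)"
  using assms by (simp add: el_def sorted_image_strict_mono)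

lemma enum_from: "enumerate {m::nat..} n = m + n"
proof (induction n arbitrary: m)
  case 0 then show ?case by (simp add: enumerate_0 Least_equality)
next
  case (Suc n)
  have "enumerate {m..} 0 = m" by (simp add: enumerate_0 Least_equality)
  moreover have "{m..} - {m} = {Suc m..}" by auto
  ultimately show ?case using Suc by (simp add: enumerate_Suc')
qed

definition Tset :: "nat set \<Rightarrow> nat \<Rightarrow> nat \<Rightarrow> nat \<Rightarrow> nat set \<Rightarrow> nat set" where
  "Tset M p m0 i s = (\<lambda>v. enumerate M (p*(v+m0+1)+i)) ` s"

definition TT :: "nat set \<Rightarrow> nat \<Rightarrow> nat \<Rightarrow> nat set list \<Rightarrow> nat set list" where
  "TT M p m0 ss = map (\<lambda>q. Tset M p m0 (q mod p) (ss ! (q div p))) [0..<length ss * p]"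

lemma sm_T: "infinite M \<Longrightarrow> p \<ge> 1 \<Longrightarrow> strict_mono (\<lambda>v. enumerate M (p*(v+m0+1)+i))"
  by (rule strict_monoI) (simp add: enumerate_mono)

lemma el_T:
  assumes "infinite M" "kset M' k s" "1 \<le> r" "r \<le> k" "p \<ge> 1"
  shows "el (Tset M p m0 i s) r = enumerate M (p*(el s r+m0+1)+i)"
  unfolding Tset_def using el_image[OF sm_T[OF assms(1) assms(5)]] assms unfolding kset_def by auto

lemma kset_T:
  assumes "infinite M" "kset M' k s" "p \<ge> 1"
  shows "kset M k (Tset M p m0 i s)"
proof -
  have "inj (\<lambda>v. enumerate M (p*(v+m0+1)+i))" using sm_T[OF assms(1) assms(3)] strict_mono_imp_inj_on by blast
  then show ?thesis using assms unfolding kset_def Tset_def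
    by (auto simp: card_image inj_on_subset enumerate_in_set)
qed

lemma length_TT: "length (TT M p m0 ss) = length ss * p" by (simp add: TT_def)

lemma nth_TT: "q < length ss * p \<Longrightarrow> TT M p m0 ss ! q = Tset M p m0 (q mod p) (ss ! (q div p))"
  by (simp add: TT_def)

lemma div_lt: "(q::nat) < n * p \<Longrightarrow> q div p < n"
  by (simp add: less_mult_imp_div_less)

lemma dm_helper:
  assumes "(p::nat) \<ge> 1"
  shows "(p - 1 + p*m) div p = m" "(p - 1 + p*m) mod p = p - 1"
proof -
  have a: "p - 1 + p*m = (p - 1) + m*p" by simp
  have b: "(p - 1) div p = 0" "(p - 1) mod p = p - 1" using assms by auto
  show "(p - 1 + p*m) div p = m" unfolding a using assms b by (simp only: div_mult_self1)
  show "(p - 1 + p*m) mod p = p - 1" unfolding a using assms b by (simp only: mod_mult_self1) 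
qed

lemma plegma_TT:
  assumes M: "infinite M" and p: "p \<ge> 1" and pl: "plegma M' k ss"
  shows "plegma M k (TT M p m0 ss)"
proof -
  let ?T = "TT M p m0 ss"
  let ?n = "length ss"
  have ne: "ss \<noteq> []" and ks: "\<And>s. s \<in> set ss \<Longrightarrow> kset M' k s"
    and inc: "\<And>i j. i \<in> {1..k} \<Longrightarrow> Suc j < ?n \<Longrightarrow> el (ss ! j) i < el (ss ! Suc j) i"
    and lh: "\<And>i. 1 \<le> i \<Longrightarrow> i < k \<Longrightarrow> el (last ss) i < el (hd ss) (Suc i)"
    using pl unfolding plegma_def by auto
  have n: "?n \<ge> 1" using ne by (cases ss) auto
  have ksn: "\<And>j. j < ?n \<Longrightarrow> kset M' k (ss ! j)" using ks nth_mem by blast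
  have lenT: "length ?T = ?n * p" by (simp add: length_TT)
  have "?T \<noteq> []" using n p ne by (simp add: TT_def)
  moreover have "\<forall>s\<in>set ?T. kset M k s"
  proof
    fix s assume "s \<in> set ?T"
    then obtain q where q: "q < ?n * p" "s = ?T ! q" by (metis in_set_conv_nth lenT)
    then show "kset M k s" using nth_TT[OF q(1)] kset_T[OF M ksn[OF div_lt[OF q(1)]] p] by simp
  qed
  moreover have "\<forall>i\<in>{1..k}. \<forall>j. Suc j < length ?T \<longrightarrow> el (?T ! j) i < el (?T ! Suc j) i"
  proof (intro ballI allI impI)
    fix i j assume i: "i \<in> {1..k}" and j: "Suc j < length ?T"
    have j1: "j < ?n * p" "Suc j < ?n * p" using j lenT by auto
    have d1: "j div p < ?n" "Suc j div p < ?n" using div_lt j1 by auto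
    have e1: "el (?T ! j) i = enumerate M (p*(el (ss ! (j div p)) i+m0+1)+ j mod p)"
      using nth_TT[OF j1(1)] el_T[OF M ksn[OF d1(1)]] i p by auto
    have e2: "el (?T ! Suc j) i = enumerate M (p*(el (ss ! (Suc j div p)) i+m0+1)+ Suc j mod p)"
      using nth_TT[OF j1(2)] el_T[OF M ksn[OF d1(2)]] i p by auto
    have "p*(el (ss ! (j div p)) i+m0+1)+ j mod p < p*(el (ss ! (Suc j div p)) i+m0+1)+ Suc j mod p"
    proof (cases "Suc (j mod p) = p")
      case True
      then have a: "Suc j mod p = 0" "Suc j div p = Suc (j div p)" by (simp_all add: mod_Suc div_Suc)
      have "el (ss ! (j div p)) i < el (ss ! Suc (j div p)) i" using inc[OF i] d1 a by auto
      then have "el (ss ! (j div p)) i + 1 \<le> el (ss ! Suc (j div p)) i" by simp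
      then have "p*(el (ss ! (j div p)) i+m0+1) + p \<le> p*(el (ss ! Suc (j div p)) i+m0+1)"
        using mult_le_mono2[of "el (ss ! (j div p)) i + 1 + m0" "el (ss ! Suc (j div p)) i + m0" p] by (simp add: algebra_simps)
      then show ?thesis using a True by simp
    next
      case False
      then have a: "Suc j mod p = Suc (j mod p)" "Suc j div p = j div p" by (simp_all add: mod_Suc div_Suc)
      then show ?thesis by simp
    qed
    then show "el (?T ! j) i < el (?T ! Suc j) i" using e1 e2 M by simp
  qed
  moreover have "\<forall>i. 1 \<le> i \<and> i < k \<longrightarrow> el (last ?T) i < el (hd ?T) (Suc i)"
  proof (intro allI impI)
    fix i assume i: "1 \<le> i \<and> i < k"
    have np: "?n * p - 1 < ?n * p" "0 < ?n * p" using n p by (simp_all add: Suc_le_eq)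
    have lT: "last ?T = ?T ! (?n * p - 1)" using lenT \<open>?T \<noteq> []\<close> by (simp add: last_conv_nth)
    have hT: "hd ?T = ?T ! 0" using \<open>?T \<noteq> []\<close> by (simp add: hd_conv_nth)
    have dm: "(?n * p - 1) div p = ?n - 1" "(?n * p - 1) mod p = p - 1"
    proof -
      have eq: "?n * p - 1 = (p - 1) + p * (?n - 1)" using n p
      proof -
        obtain a where "?n = Suc a" using n by (cases ?n) auto
        moreover obtain b where "p = Suc b" using p by (cases p) auto
        ultimately show ?thesis by (simp add: algebra_simps)
      qed
      show "(?n * p - 1) div p = ?n - 1" unfolding eq using dm_helper[OF p] by blast
      show "(?n * p - 1) mod p = p - 1" unfolding eq using dm_helper[OF p] by blast
    qed
    have ls: "last ss = ss ! (?n - 1)" using ne by (simp add: last_conv_nth)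
    have hs: "hd ss = ss ! 0" using ne by (simp add: hd_conv_nth)
    have e1: "el (last ?T) i = enumerate M (p*(el (last ss) i+m0+1)+ (p - 1))"
      using lT nth_TT[OF np(1)] dm el_T[OF M ksn[of "?n - 1"]] i n ls p by auto
    have e2: "el (hd ?T) (Suc i) = enumerate M (p*(el (hd ss) (Suc i)+m0+1))"
      using hT nth_TT[OF np(2)] el_T[OF M ksn[of 0], of "Suc i" p m0 0] i n hs p ne by auto
    have "el (last ss) i + 1 \<le> el (hd ss) (Suc i)" using lh i by (simp add: Suc_le_eq)
    then have "p*(el (last ss) i+m0+1) + p \<le> p*(el (hd ss) (Suc i)+m0+1)"
      using mult_le_mono2[of "el (last ss) i + 1 + m0" "el (hd ss) (Suc i) + m0" p] by (simp add: algebra_simps)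
    then have "p*(el (last ss) i+m0+1)+ (p - 1) < p*(el (hd ss) (Suc i)+m0+1)" using p by linarith
    then show "el (last ?T) i < el (hd ?T) (Suc i)" using e1 e2 M by simp
  qed
  ultimately show ?thesis unfolding plegma_def by blast
qed


lemma sum_lt_plus: "sum f {..<a+(p::nat)} = sum f {..<a} + (\<Sum>i<p. f (a+i))"
  by (induction p) (simp_all add: add.assoc)

lemma sum_divmod:
  assumes "(p::nat) \<ge> 1"
  shows "(\<Sum>q<n*p. g (q div p) (q mod p)) = (\<Sum>j<n. \<Sum>i<p. (g j i :: 'b::comm_monoid_add))"
proof (induction n)
  case 0 then show ?case by simp
next
  case (Suc n)
  have "(\<Sum>q<Suc n*p. g (q div p) (q mod p)) = (\<Sum>q<n*p + p. g (q div p) (q mod p))"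
    by (simp add: add.commute)
  also have "\<dots> = (\<Sum>q<n*p. g (q div p) (q mod p)) + (\<Sum>i<p. g ((n*p+i) div p) ((n*p+i) mod p))"
    by (rule sum_lt_plus)
  also have "(\<Sum>i<p. g ((n*p+i) div p) ((n*p+i) mod p)) = (\<Sum>i<p. g n i)"
    using assms by (intro sum.cong) auto
  finally show ?case using Suc by simp
qed


lemma enum_UNIV: "enumerate (UNIV::nat set) n = n"
  using enum_from[of 0 n] by (simp add: atLeast_0)

lemma core:
  fixes x :: "nat set \<Rightarrow> 'a::real_normed_vector"
  assumes M: "infinite M" and p: "p \<ge> 1" and k: "k \<ge> 1"
    and del: "\<forall>l m ss a. 1 \<le> m \<and> m \<le> l \<and> length ss = m \<and> plegma M k ss \<and> el (hd ss) 1 \<ge> elM M l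
        \<and> (\<forall>j. \<bar>a j\<bar> \<le> 1) \<longrightarrow>
        \<bar>norm (\<Sum>j<m. a j *\<^sub>R x (ss ! j)) - N (trunc a m)\<bar> \<le> \<delta> l"
    and a1: "\<forall>i. \<bar>a i\<bar> \<le> 1"
    and pl: "plegma UNIV k ss" and n: "length ss = n" "n \<ge> 1"
    and b1: "\<forall>j. \<bar>b j\<bar> \<le> 1"
    and L: "n * p \<le> L" "elM M L \<le> enumerate M (p*(el (hd ss) 1 + m0 + 1))"
  shows "\<bar>norm (\<Sum>j<n. b j *\<^sub>R (\<Sum>i<p. a i *\<^sub>R x (Tset M p m0 i (ss ! j))))
          - N (trunc (\<lambda>q. b (q div p) * a (q mod p)) (n*p))\<bar> \<le> \<delta> L"
proof -
  let ?c = "\<lambda>q. b (q div p) * a (q mod p)"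
  let ?T = "TT M p m0 ss"
  have ne: "ss \<noteq> []" using n by auto
  have ks0: "kset UNIV k (ss ! 0)" using pl ne unfolding plegma_def by auto
  have np: "1 \<le> n * p" using n p by simp
  have hT: "hd ?T = Tset M p m0 0 (ss ! 0)"
    using ne p n np by (simp add: TT_def hd_conv_nth hd_map)
  have ehT: "el (hd ?T) 1 = enumerate M (p*(el (hd ss) 1 + m0 + 1))"
    using hT el_T[OF M ks0, of 1 p m0 0] k p ne by (simp add: hd_conv_nth)
  have c1: "\<forall>q. \<bar>?c q\<bar> \<le> 1"
    using a1 b1 by (simp add: abs_mult mult_le_one)
  have "\<bar>norm (\<Sum>q<n*p. ?c q *\<^sub>R x (?T ! q)) - N (trunc ?c (n*p))\<bar> \<le> \<delta> L"
    using del[rule_format, of "n*p" L ?T ?c] np L plegma_TT[OF M p pl] c1 ehT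
    by (simp add: length_TT n)
  moreover have "(\<Sum>q<n*p. ?c q *\<^sub>R x (?T ! q))
      = (\<Sum>j<n. b j *\<^sub>R (\<Sum>i<p. a i *\<^sub>R x (Tset M p m0 i (ss ! j))))"
  proof -
    have "(\<Sum>q<n*p. ?c q *\<^sub>R x (?T ! q))
        = (\<Sum>q<n*p. (\<lambda>j i. (b j * a i) *\<^sub>R x (Tset M p m0 i (ss ! j))) (q div p) (q mod p))"
      by (intro sum.cong refl) (simp add: nth_TT n)
    also have "\<dots> = (\<Sum>j<n. \<Sum>i<p. (b j * a i) *\<^sub>R x (Tset M p m0 i (ss ! j)))"
      by (rule sum_divmod[OF p])
    finally show ?thesis by (simp add: scaleR_sum_right)
  qed
  ultimately show ?thesis by simp
qed

theorem mainTheorem10: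
  fixes k :: nat
  assumes "k \<ge> 1"
    and "\<exists>(x :: nat set \<Rightarrow> 'a::banach) M N. infinite M \<and> seminorm_c00 N
           \<and> generates_ksm k x M N \<and> equiv_l1 N"
  shows "\<forall>\<epsilon>>0. \<exists>y :: nat set \<Rightarrow> 'a.
           (\<forall>s. kset UNIV k s \<longrightarrow> 1 - \<epsilon> \<le> norm (y s) \<and> norm (y s) \<le> 1)
         \<and> (\<exists>M N. infinite M \<and> seminorm_c00 N \<and> generates_ksm k y M N
              \<and> (\<forall>n a. N (trunc a n) \<ge> (1 - \<epsilon>) * (\<Sum>i<n. \<bar>a i\<bar>)))"
proof (intro allI impI)
  fix \<epsilon> :: real assume eps: "\<epsilon> > 0"
  obtain x :: "nat set \<Rightarrow> 'a" and M N where M: "infinite M" and sn: "seminorm_c00 N"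
    and gen: "generates_ksm k x M N" and l1: "equiv_l1 N" using assms(2) by blast
  obtain c C where c: "0 < c" and cC0: "\<forall>n a. c * (\<Sum>i<n. \<bar>a i\<bar>) \<le> N (trunc a n)"
    using l1 unfolding equiv_l1_def by blast
  have cC: "c * (\<Sum>i<n. \<bar>a i\<bar>) \<le> N (trunc a n)" for n a using cC0 by blast
  obtain \<delta> :: "nat \<Rightarrow> real" where dpos: "\<forall>l. \<delta> l > 0" and dlim: "\<delta> \<longlonglongrightarrow> 0"
    and del: "\<forall>l m ss a. 1 \<le> m \<and> m \<le> l \<and> length ss = m \<and> plegma M k ss \<and> el (hd ss) 1 \<ge> elM M l
        \<and> (\<forall>j. \<bar>a j\<bar> \<le> 1) \<longrightarrow>
        \<bar>norm (\<Sum>j<m. a j *\<^sub>R x (ss ! j)) - N (trunc a m)\<bar> \<le> \<delta> l"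
    using gen unfolding generates_ksm_def by blast
  have subadd: "\<And>a b. fsupp a \<Longrightarrow> fsupp b \<Longrightarrow> N (\<lambda>n. a n + b n) \<le> N a + N b"
    and hom: "\<And>c a. fsupp a \<Longrightarrow> N (\<lambda>n. c * a n) = \<bar>c\<bar> * N a"
    using sn unfolding seminorm_c00_def by blast+
  have fs_tr: "fsupp (trunc a m)" for a m
    unfolding fsupp_def trunc_def by (rule finite_subset[of _ "{..<m}"]) auto
  have Nnn: "N (trunc a m) \<ge> 0" for a m
    using cC[of a m] c by (meson mult_nonneg_nonneg order.trans sum_nonneg abs_ge_zero less_imp_le)
  define S where "S = {N (trunc a m) | a m. (\<Sum>i<m. \<bar>a i\<bar>) = 1}"
  define lam where "lam = Inf S"
  have Sne: "S \<noteq> {}" unfolding S_def by (rule ccontr) (auto dest: spec[of _ "\<lambda>_. 1"] spec[of _ 1])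
  have Sge: "\<And>v. v \<in> S \<Longrightarrow> c \<le> v" unfolding S_def
  proof clarify
    fix a :: "nat \<Rightarrow> real" and m :: nat assume "(\<Sum>i<m. \<bar>a i\<bar>) = 1"
    then show "c \<le> N (trunc a m)" using cC[of a m] by simp
  qed
  have bdd: "bdd_below S" by (rule bdd_belowI, erule Sge)
  have lamc: "c \<le> lam" unfolding lam_def using Sne Sge by (rule cInf_greatest)
  have lam_pos: "lam > 0" using lamc c by simp
  have lower: "N (trunc a m) \<ge> lam * (\<Sum>i<m. \<bar>a i\<bar>)" for a m
  proof (cases "(\<Sum>i<m. \<bar>a i\<bar>) = 0")
    case True then show ?thesis using Nnn by simp
  next
    case False
    define \<sigma> where "\<sigma> = (\<Sum>i<m. \<bar>a i\<bar>)"
    have sp: "\<sigma> > 0" using False unfolding \<sigma>_def by (simp add: order_le_neq_trans sum_nonneg)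
    define a' where "a' = (\<lambda>i. a i / \<sigma>)"
    have "(\<Sum>i<m. \<bar>a' i\<bar>) = (\<Sum>i<m. \<bar>a i\<bar>) / \<sigma>"
      unfolding a'_def using sp by (simp add: sum_divide_distrib)
    then have "(\<Sum>i<m. \<bar>a' i\<bar>) = 1" using sp unfolding \<sigma>_def by simp
    then have "N (trunc a' m) \<in> S" unfolding S_def by blast
    then have l: "lam \<le> N (trunc a' m)" unfolding lam_def using bdd by (rule cInf_lower)
    have "trunc a m = (\<lambda>n. \<sigma> * trunc a' m n)" unfolding trunc_def a'_def using sp by auto
    then have "N (trunc a m) = \<sigma> * N (trunc a' m)" using hom[OF fs_tr] sp by simp
    then show ?thesis using l sp unfolding \<sigma>_def[symmetric] by (simp add: mult.commute)
  qed
  define \<eta> where "\<eta> = min 1 \<epsilon> / 4"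
  have eta: "\<eta> > 0" "\<eta> \<le> 1/4" "\<eta> \<le> \<epsilon>/4" using eps unfolding \<eta>_def by auto
  have "lam * (1 + \<eta>) > lam" using lam_pos eta by simp
  then obtain v where "v \<in> S" "v < lam * (1 + \<eta>)"
    using cInf_lessD[OF Sne] unfolding lam_def by blast
  then obtain a0 p where a0: "(\<Sum>i<p. \<bar>a0 i\<bar>) = 1" and rho0: "N (trunc a0 p) < lam * (1 + \<eta>)"
    unfolding S_def by blast
  define a where "a = trunc a0 p"
  have p: "p \<ge> 1" using a0 by (cases p) auto
  have asum: "(\<Sum>i<p. \<bar>a i\<bar>) = 1" using a0 unfolding a_def trunc_def by simp
  have a1: "\<forall>i. \<bar>a i\<bar> \<le> 1"
  proof
    fix i show "\<bar>a i\<bar> \<le> 1"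
    proof (cases "i < p")
      case True
      then have "\<bar>a i\<bar> \<le> (\<Sum>i<p. \<bar>a i\<bar>)" by (intro member_le_sum) auto
      then show ?thesis using asum by simp
    qed (simp add: a_def trunc_def)
  qed
  have tra: "trunc a p = trunc a0 p" unfolding a_def trunc_def by auto
  define \<rho> where "\<rho> = N (trunc a p)"
  have rho_lam: "\<rho> \<ge> lam" using lower[of a p] asum unfolding \<rho>_def by simp
  have rho_pos: "\<rho> > 0" using rho_lam lam_pos by simp
  have rho_up: "\<rho> < lam * (1 + \<eta>)" using rho0 tra unfolding \<rho>_def by simp
  define R where "R = \<rho> * (1 + \<eta>)"
  have R_pos: "R > 0" using rho_pos eta unfolding R_def by simp
  obtain L0 where L0: "\<And>L. L \<ge> L0 \<Longrightarrow> \<delta> L \<le> \<eta> * \<rho>"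
  proof -
    have "\<eta> * \<rho> > 0" using eta rho_pos by simp
    then have "eventually (\<lambda>L. \<delta> L < \<eta> * \<rho>) sequentially"
      using order_tendstoD(2)[OF dlim] by blast
    then show ?thesis using that unfolding eventually_sequentially by (meson less_imp_le)
  qed
  define m0 where "m0 = L0"
  define z where "z = (\<lambda>s. \<Sum>i<p. a i *\<^sub>R x (Tset M p m0 i s))"
  define y where "y = (\<lambda>s. (1 / R) *\<^sub>R z s)"
  define N' where "N' = (\<lambda>b. N (\<lambda>q. b (q div p) * a (q mod p)) / R)"
  note core' = core[OF M p assms(1) del a1]
  have ctr: "(\<lambda>q. trunc b n (q div p) * a (q mod p)) = trunc (\<lambda>q. b (q div p) * a (q mod p)) (n*p)" for b n
  proof
    fix q
    have "(q div p < n) = (q < n * p)" using p by (simp add: less_mult_imp_div_less div_less_iff_less_mult)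
    then show "trunc b n (q div p) * a (q mod p) = trunc (\<lambda>q. b (q div p) * a (q mod p)) (n*p) q"
      unfolding trunc_def by auto
  qed
  have nb: "1 - \<epsilon> \<le> norm (y s) \<and> norm (y s) \<le> 1" if ks: "kset UNIV k s" for s
  proof -
    define L where "L = p*(el s 1 + m0 + 1) + 1"
    have sss: "sorted_wrt (<) (sorted_list_of_set s)" by simp
    have pls: "plegma UNIV k [s]" using ks unfolding plegma_def kset_def
      by (auto simp: el_def intro!: sorted_wrt_nth_less[OF sss])
    have "\<bar>norm (\<Sum>j<1. (\<lambda>_. 1::real) j *\<^sub>R (\<Sum>i<p. a i *\<^sub>R x (Tset M p m0 i ([s] ! j))))
          - N (trunc (\<lambda>q. (\<lambda>_. 1::real) (q div p) * a (q mod p)) (1*p))\<bar> \<le> \<delta> L"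
      by (rule core'[OF pls]) (auto simp: L_def elM_def)
    moreover have "trunc (\<lambda>q. (\<lambda>_. 1::real) (q div p) * a (q mod p)) (1*p) = trunc a p"
      unfolding trunc_def by auto
    ultimately have e: "\<bar>norm (z s) - \<rho>\<bar> \<le> \<delta> L" unfolding z_def \<rho>_def by simp
    have "L \<ge> L0" unfolding L_def m0_def using p
      by (metis add.commute le_add2 le_trans mult_le_mono1 mult_1 trans_le_add2 add_lessD1 le_add1 less_imp_le_nat)
    then have e2: "\<bar>norm (z s) - \<rho>\<bar> \<le> \<eta> * \<rho>" using e L0 by force
    have ny: "norm (y s) = norm (z s) / R" unfolding y_def using R_pos by simp
    have up: "norm (z s) \<le> R" using e2 unfolding R_def by (simp add: algebra_simps)
    have lo: "(1 - \<epsilon>) * R \<le> norm (z s)"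
    proof -
      have "(1 - \<epsilon>) * R = \<rho> * ((1 - \<epsilon>) * (1 + \<eta>))" unfolding R_def by (simp add: algebra_simps)
      also have "\<dots> \<le> \<rho> * (1 - \<eta>)"
      proof -
        have e0: "(1-\<epsilon>)*(1+\<eta>) = 1 + \<eta> - \<epsilon> - \<epsilon>*\<eta>" by (simp add: algebra_simps)
        have "\<epsilon>*\<eta> \<ge> 0" using eps eta by simp
        then have "(1-\<epsilon>)*(1+\<eta>) \<le> 1 - \<eta>" using e0 eta(3) eps by linarith
        then show ?thesis using rho_pos by (intro mult_left_mono) auto
      qed
      also have "\<dots> \<le> norm (z s)" using e2 by (simp add: algebra_simps)
      finally show ?thesis .
    qed
    have "norm (y s) \<le> 1" unfolding ny using up R_pos by simp
    moreover have "1 - \<epsilon> \<le> norm (y s)" unfolding ny using lo R_pos by (simp add: pos_le_divide_eq)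
    ultimately show ?thesis by simp
  qed
  have fsC: "fsupp (\<lambda>q. b (q div p) * a (q mod p))" if "fsupp b" for b
  proof -
    obtain K where K: "{n. b n \<noteq> 0} \<subseteq> {..<K}"
      using \<open>fsupp b\<close> unfolding fsupp_def by (meson finite_nat_iff_bounded subsetI)
    have "{q. b (q div p) * a (q mod p) \<noteq> 0} \<subseteq> {..<K*p}"
    proof
      fix q assume "q \<in> {q. b (q div p) * a (q mod p) \<noteq> 0}"
      then have "q div p < K" using K by auto
      then show "q \<in> {..<K*p}" using p by (simp add: div_less_iff_less_mult)
    qed
    then show ?thesis unfolding fsupp_def by (rule finite_subset) simp
  qed
  have sn': "seminorm_c00 N'"
    unfolding seminorm_c00_def
  proof (intro conjI allI impI)
    fix b1 b2 :: "nat \<Rightarrow> real" assume f1: "fsupp b1" and f2: "fsupp b2"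
    have eq: "(\<lambda>q. (\<lambda>n. b1 n + b2 n) (q div p) * a (q mod p))
        = (\<lambda>q. (\<lambda>q. b1 (q div p) * a (q mod p)) q + (\<lambda>q. b2 (q div p) * a (q mod p)) q)"
      by (simp add: algebra_simps)
    have "N (\<lambda>q. (\<lambda>n. b1 n + b2 n) (q div p) * a (q mod p))
        \<le> N (\<lambda>q. b1 (q div p) * a (q mod p)) + N (\<lambda>q. b2 (q div p) * a (q mod p))"
      unfolding eq by (rule subadd[OF fsC[OF f1] fsC[OF f2]])
    then show "N' (\<lambda>n. b1 n + b2 n) \<le> N' b1 + N' b2"
      unfolding N'_def using R_pos by (simp add: add_divide_distrib[symmetric] divide_right_mono)
  next
    fix c :: real and b :: "nat \<Rightarrow> real" assume f: "fsupp b"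
    have eq: "(\<lambda>q. (\<lambda>n. c * b n) (q div p) * a (q mod p)) = (\<lambda>q. c * (\<lambda>q. b (q div p) * a (q mod p)) q)"
      by (simp add: algebra_simps)
    show "N' (\<lambda>n. c * b n) = \<bar>c\<bar> * N' b"
      unfolding N'_def eq hom[OF fsC[OF f]] by simp
  qed
  have smf: "strict_mono (\<lambda>l. p*(l+m0)+1)"
    by (rule strict_monoI) (use p in simp)
  have dl2: "(\<lambda>l. \<delta> (p*(l+m0)+1) / R) \<longlonglongrightarrow> 0"
  proof -
    have "(\<delta> \<circ> (\<lambda>l. p*(l+m0)+1)) \<longlonglongrightarrow> 0" by (rule LIMSEQ_subseq_LIMSEQ[OF dlim smf])
    then show ?thesis by (intro tendsto_divide_zero) (simp add: o_def)
  qed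
  have gen': "generates_ksm k y UNIV N'"
    unfolding generates_ksm_def
  proof (intro exI[of _ "\<lambda>l. \<delta> (p*(l+m0)+1) / R"] conjI allI impI)
    show "\<And>l. 0 < \<delta> (p*(l+m0)+1) / R" using dpos R_pos by simp
    show "(\<lambda>l. \<delta> (p*(l+m0)+1) / R) \<longlonglongrightarrow> 0" by (rule dl2)
  next
    fix l m :: nat and ss :: "nat set list" and b :: "nat \<Rightarrow> real"
    assume h: "1 \<le> m \<and> m \<le> l \<and> length ss = m \<and> plegma UNIV k ss \<and> elM UNIV l \<le> el (hd ss) 1
        \<and> (\<forall>j. \<bar>b j\<bar> \<le> (1::real))"
    define L where "L = p*(l+m0)+1"
    have hd1: "l - 1 \<le> el (hd ss) 1" using h by (simp add: elM_def enum_UNIV)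
    have mpL: "m * p \<le> L"
    proof -
      have "m * p \<le> l * p" using h by simp
      also have "\<dots> \<le> p * (l + m0)" by (simp add: algebra_simps)
      finally have "m * p \<le> p * (l + m0)" .
      then show ?thesis unfolding L_def by linarith
    qed
    have "l + m0 \<le> el (hd ss) 1 + m0 + 1" using hd1 by linarith
    then have le2: "p*(l+m0) \<le> p*(el (hd ss) 1 + m0 + 1)" by (rule mult_le_mono2)
    have elL: "elM M L \<le> enumerate M (p*(el (hd ss) 1 + m0 + 1))"
      unfolding elM_def L_def using le2 M by simp
    have cr: "\<bar>norm (\<Sum>j<m. b j *\<^sub>R (\<Sum>i<p. a i *\<^sub>R x (Tset M p m0 i (ss ! j))))
          - N (trunc (\<lambda>q. b (q div p) * a (q mod p)) (m*p))\<bar> \<le> \<delta> L"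
      by (rule core') (use h mpL elL in auto)
    have sy: "(\<Sum>j<m. b j *\<^sub>R y (ss ! j)) = (1/R) *\<^sub>R (\<Sum>j<m. b j *\<^sub>R z (ss ! j))"
      unfolding y_def scaleR_sum_right by (intro sum.cong refl) simp
    have nt: "N' (trunc b m) = N (trunc (\<lambda>q. b (q div p) * a (q mod p)) (m*p)) / R"
      unfolding N'_def ctr ..
    have "\<bar>norm (\<Sum>j<m. b j *\<^sub>R y (ss ! j)) - N' (trunc b m)\<bar>
        = \<bar>norm (\<Sum>j<m. b j *\<^sub>R z (ss ! j)) - N (trunc (\<lambda>q. b (q div p) * a (q mod p)) (m*p))\<bar> / R"
      unfolding sy nt using R_pos by (simp add: diff_divide_distrib[symmetric])
    also have "\<dots> \<le> \<delta> L / R" using cr R_pos unfolding z_def by (simp add: divide_right_mono)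
    finally show "\<bar>norm (\<Sum>j<m. b j *\<^sub>R y (ss ! j)) - N' (trunc b m)\<bar> \<le> \<delta> (p*(l+m0)+1) / R"
      unfolding L_def .
  qed
  have low': "N' (trunc b n) \<ge> (1 - \<epsilon>) * (\<Sum>i<n. \<bar>b i\<bar>)" for n b
  proof -
    define B where "B = (\<Sum>i<n. \<bar>b i\<bar>)"
    have B0: "B \<ge> 0" unfolding B_def by (simp add: sum_nonneg)
    have sc: "(\<Sum>q<n*p. \<bar>b (q div p) * a (q mod p)\<bar>) = B"
    proof -
      have "(\<Sum>q<n*p. \<bar>b (q div p) * a (q mod p)\<bar>) = (\<Sum>q<n*p. (\<lambda>j i. \<bar>b j\<bar> * \<bar>a i\<bar>) (q div p) (q mod p))"
        by (simp add: abs_mult)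
      also have "\<dots> = (\<Sum>j<n. \<Sum>i<p. \<bar>b j\<bar> * \<bar>a i\<bar>)" by (rule sum_divmod[OF p])
      also have "\<dots> = (\<Sum>j<n. \<bar>b j\<bar>)" by (simp add: sum_distrib_left[symmetric] asum)
      finally show ?thesis unfolding B_def .
    qed
    have nt: "N' (trunc b n) = N (trunc (\<lambda>q. b (q div p) * a (q mod p)) (n*p)) / R"
      unfolding N'_def ctr ..
    have g: "N' (trunc b n) \<ge> lam * B / R"
      unfolding nt using lower[of "\<lambda>q. b (q div p) * a (q mod p)" "n*p"] sc R_pos
      by (simp add: divide_right_mono)
    show ?thesis
    proof (cases "\<epsilon> \<ge> 1")
      case True
      have "(1 - \<epsilon>) * B \<le> 0" using True B0 by (simp add: mult_nonpos_nonneg)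
      moreover have "0 \<le> lam * B / R" using lam_pos B0 R_pos by simp
      ultimately show ?thesis using g unfolding B_def by linarith
    next
      case False
      have q1: "(1 - \<epsilon>) * (1 + \<eta>) * (1 + \<eta>) \<le> 1"
      proof -
        have e0: "(1 - \<epsilon>) * (1 + \<eta>) * (1 + \<eta>) = (1 - \<epsilon>) * (1 + 2*\<eta> + \<eta>*\<eta>)" by (simp add: algebra_simps)
        have "\<eta>*\<eta> \<le> \<eta>" using eta by (simp add: mult_le_cancel_left1)
        then have "1 + 2*\<eta> + \<eta>*\<eta> \<le> 1 + 3*\<eta>" by simp
        then have "(1 - \<epsilon>) * (1 + 2*\<eta> + \<eta>*\<eta>) \<le> (1 - \<epsilon>) * (1 + 3*\<eta>)"
          using False by (intro mult_left_mono) auto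
        also have "\<dots> = 1 + 3*\<eta> - \<epsilon> - 3*\<epsilon>*\<eta>" by (simp add: algebra_simps)
        also have "\<dots> \<le> 1"
        proof -
          have "3*\<epsilon>*\<eta> \<ge> 0" using eta eps by simp
          then show ?thesis using eta eps by linarith
        qed
        finally show ?thesis unfolding e0 .
      qed
      have "(1 - \<epsilon>) * R \<le> (1 - \<epsilon>) * (lam * (1 + \<eta>) * (1 + \<eta>))"
        unfolding R_def using False rho_up eta by (intro mult_left_mono) auto
      also have "\<dots> = lam * ((1 - \<epsilon>) * (1 + \<eta>) * (1 + \<eta>))" by (simp add: algebra_simps)
      also have "\<dots> \<le> lam" using q1 lam_pos by (simp add: mult_le_cancel_left1)
      finally have "(1 - \<epsilon>) * R \<le> lam" .
      then have "(1 - \<epsilon>) * B * R \<le> lam * B" using B0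
        by (metis mult.commute mult.left_commute mult_right_mono)
      then have "(1 - \<epsilon>) * B \<le> lam * B / R" using R_pos by (simp add: pos_le_divide_eq)
      then show ?thesis using g unfolding B_def by linarith
    qed
  qed
  show "\<exists>y :: nat set \<Rightarrow> 'a.
           (\<forall>s. kset UNIV k s \<longrightarrow> 1 - \<epsilon> \<le> norm (y s) \<and> norm (y s) \<le> 1)
         \<and> (\<exists>M N. infinite M \<and> seminorm_c00 N \<and> generates_ksm k y M N
              \<and> (\<forall>n a. N (trunc a n) \<ge> (1 - \<epsilon>) * (\<Sum>i<n. \<bar>a i\<bar>)))"
    by (rule exI[of _ y]) (use nb sn' gen' low' in \<open>auto intro!: exI[of _ UNIV] exI[of _ N']\<close>)
qed

end
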